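(* For every $n\in\mathbb N$, the set $\mathcal G_n$ of $n$-mode Gaussian states is closed in $\mathcal T(\mathcal H_n)$ with respect to the trace norm: if $\rho_G[V(k),s(k)]\in\mathcal G_n$ is a sequence and $\rho\in\mathcal T(\mathcal H_n)$ satisfies $\lim_{k\to\infty}\|\rho_G[V(k),s(k)]-\rho\|_1=0$, then $\rho\in\mathcal G_n$.
   Context: $\mathcal H_n$ is the Hilbert space of $n$ bosonic modes, with canonical operators arranged as $r=(x_1,\dots,x_n,p_1,\dots,p_n)^T$ satisfying $[r,r^T]=i\Omega$, where $\Omega=\begin{pmatrix}0&\mathbb 1_n\\-\mathbb 1_n&0\end{pmatrix}$. $\mathcal T(\mathcal H_n)$ is the Banach space of trace-class operators with trace norm $\|\cdot\|_1$. $\mathrm{QCM}_n=\{V\in M_{2n}(\mathbb R): V=V^T,\ V\ge i\Omega\}$ is the set of quantum covariance matrices (all such $V$ are positive definite). For $V\in\mathrm{QCM}_n$ and $s\in\mathbb R^{2n}$, $\rho_G[V,s]$ is the Gaussian state with displacement vector $s=\mathrm{Tr}[\rho r]$ and covariance matrix $V_{jk}=\mathrm{Tr}[\rho\{(r-s)_j,(r-s)_k\}]$; equivalently its characteristic function is $\mathrm{Tr}[\rho_G[V,s]D(\xi)]=e^{-\frac14\xi^T\Omega^TV\Omega\xi+is^T\Omega\xi}$, with $D(\xi)=e^{i\xi^T\Omega r}$. $\mathcal G_n$ denotes the set of all states $\rho_G[V,s]$. *)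

theory Defs
  imports "HOL-Analysis.Analysis"
begin

text \<open>Concrete model of the n-mode bosonic Hilbert space H_n = L^2(R^n) in the
  position (Schroedinger) representation.  The number of modes n is the
  cardinality of the finite index type 'n.  Wave functions are functions
  real^'n \<Rightarrow> complex; vectors of H_n are the square-integrable ones,
  taken up to almost-everywhere equality.\<close>

type_synonym 'n wf = "real^'n \<Rightarrow> complex"
type_synonym 'n op = "'n wf \<Rightarrow> 'n wf"

definition L2 :: "('n::finite) wf set" where
  "L2 = {\<psi>. \<psi> \<in> borel_measurable lborel \<and> integrable lborel (\<lambda>x. (cmod (\<psi> x))\<^sup>2)}"

definition ae_eq :: "('n::finite) wf \<Rightarrow> 'n wf \<Rightarrow> bool" where
  "ae_eq \<phi> \<psi> \<longleftrightarrow> (AE x in lborel. \<phi> x = \<psi> x)"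

definition ip :: "('n::finite) wf \<Rightarrow> 'n wf \<Rightarrow> complex" where
  "ip \<phi> \<psi> = (LINT x|lborel. cnj (\<phi> x) * \<psi> x)"

definition orthonormal_list :: "('n::finite) wf list \<Rightarrow> bool" where
  "orthonormal_list es \<longleftrightarrow> set es \<subseteq> L2 \<and>
     (\<forall>i<length es. \<forall>j<length es. ip (es!i) (es!j) = (if i = j then 1 else 0))"

text \<open>Trace norm: supremum over pairs of finite orthonormal families.  For a
  bounded operator this equals the sum of its singular values, and it is finite
  iff the operator is trace class.\<close>
definition tnorm :: "('n::finite) op \<Rightarrow> ennreal" where
  "tnorm T = (SUP p \<in> {(es, fs). orthonormal_list es \<and> orthonormal_list fs \<and> length es = length fs}.
      ennreal (\<Sum>i<length (fst p). cmod (ip (snd p ! i) (T (fst p ! i)))))"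

definition lin_op :: "('n::finite) op \<Rightarrow> bool" where
  "lin_op T \<longleftrightarrow>
     (\<forall>\<psi>\<in>L2. T \<psi> \<in> L2) \<and>
     (\<forall>\<phi>\<in>L2. \<forall>\<psi>\<in>L2. ae_eq \<phi> \<psi> \<longrightarrow> ae_eq (T \<phi>) (T \<psi>)) \<and>
     (\<forall>\<phi>\<in>L2. \<forall>\<psi>\<in>L2. ae_eq (T (\<lambda>x. \<phi> x + \<psi> x)) (\<lambda>x. T \<phi> x + T \<psi> x)) \<and>
     (\<forall>\<psi>\<in>L2. \<forall>c. ae_eq (T (\<lambda>x. c * \<psi> x)) (\<lambda>x. c * T \<psi> x))"

definition trace_class :: "('n::finite) op \<Rightarrow> bool" where
  "trace_class T \<longleftrightarrow> lin_op T \<and> tnorm T < \<infinity>"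

definition onb_seq :: "(nat \<Rightarrow> ('n::finite) wf) \<Rightarrow> bool" where
  "onb_seq e \<longleftrightarrow> (\<forall>k. e k \<in> L2) \<and> (\<forall>j k. ip (e j) (e k) = (if j = k then 1 else 0)) \<and>
     (\<forall>\<psi>\<in>L2. (\<forall>k. ip (e k) \<psi> = 0) \<longrightarrow> ae_eq \<psi> (\<lambda>_. 0))"

text \<open>Trace, computed in a (fixed, arbitrary) orthonormal basis of the separable
  space L^2(R^n); for trace-class operators it is basis independent.\<close>
definition trace :: "('n::finite) op \<Rightarrow> complex" where
  "trace T = (let e = (SOME e. onb_seq e) in (\<Sum>k. ip (e k) (T (e k))))"

text \<open>Phase space R^{2n} indexed by 'n + 'n: Inl j is the x_j-component, Inr j the
  p_j-component, i.e. r = (x_1..x_n,p_1..p_n).\<close>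
definition Omega :: "real^('n::finite + 'n)^('n + 'n)" where
  "Omega = (\<chi> i j. case (i, j) of
       (Inl a, Inr b) \<Rightarrow> (if a = b then 1 else 0)
     | (Inr a, Inl b) \<Rightarrow> (if a = b then -1 else 0)
     | _ \<Rightarrow> 0)"

definition QCM :: "(real^('n::finite + 'n)^('n + 'n)) set" where
  "QCM = {V. transpose V = V \<and>
     (\<forall>z :: complex^('n + 'n). 0 \<le> Re (\<Sum>j\<in>UNIV. \<Sum>k\<in>UNIV.
         cnj (z $ j) * (complex_of_real (V $ j $ k) - \<i> * complex_of_real (Omega $ j $ k)) * z $ k))}"

text \<open>Weyl displacement operator D(xi) = exp(i xi^T Omega r) with xi = (a,b),
  xi^T Omega r = a.p - b.x, in the position representation:
  (D(xi) psi)(x) = exp(-i a.b/2) exp(-i b.x) psi(x + a).\<close>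
definition disp :: "real^('n::finite + 'n) \<Rightarrow> 'n op" where
  "disp \<xi> \<psi> = (let a = (\<chi> j. \<xi> $ Inl j); b = (\<chi> j. \<xi> $ Inr j) in
     (\<lambda>x. exp (- \<i> * complex_of_real (inner a b / 2)) * exp (- \<i> * complex_of_real (inner b x))
           * \<psi> (x + a)))"

definition is_gaussian :: "real^('n::finite + 'n)^('n + 'n) \<Rightarrow> real^('n + 'n) \<Rightarrow> 'n op \<Rightarrow> bool" where
  "is_gaussian V s \<rho> \<longleftrightarrow> trace_class \<rho> \<and>
     (\<forall>\<xi>. trace (\<lambda>\<psi>. \<rho> (disp \<xi> \<psi>)) =
        exp (complex_of_real (- (1/4) * inner (Omega *v \<xi>) (V *v (Omega *v \<xi>)))
             + \<i> * complex_of_real (inner s (Omega *v \<xi>))))"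

definition Gaussian_states :: "('n::finite) op set" where
  "Gaussian_states = {\<rho>. \<exists>V s. V \<in> QCM \<and> is_gaussian V s \<rho>}"

end

theory Submission
  imports Defs
begin
lemma borel_measurable_cnj[measurable]:
  "f \<in> borel_measurable M \<Longrightarrow> (\<lambda>x. cnj (f x)) \<in> borel_measurable M"
  by (rule borel_measurable_continuous_on[where f=cnj]) (auto intro: continuous_intros)

lemma L2D: assumes "f \<in> L2" shows "f \<in> borel_measurable lborel" "integrable lborel (\<lambda>x. (cmod (f x))\<^sup>2)"
  using assms by (auto simp: L2_def)

lemma L2I: "f \<in> borel_measurable lborel \<Longrightarrow> integrable lborel (\<lambda>x. (cmod (f x))\<^sup>2) \<Longrightarrow> f \<in> L2"
  by (auto simp: L2_def)

lemma sq_le_aux: fixes a b :: real assumes "0 \<le> a" "0 \<le> b" shows "a * b \<le> a\<^sup>2 + b\<^sup>2"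
proof -
  have "0 \<le> (a - b)\<^sup>2" by simp
  then have "2*a*b \<le> a\<^sup>2 + b\<^sup>2" by (simp add: power2_diff)
  moreover have "0 \<le> a * b" using assms by simp
  ultimately show ?thesis by linarith
qed

lemma sq_le_aux2: fixes a b :: real shows "(a + b)\<^sup>2 \<le> 2 * a\<^sup>2 + 2 * b\<^sup>2"
proof -
  have "0 \<le> (a - b)\<^sup>2" by simp
  then show ?thesis by (simp add: power2_diff power2_sum)
qed

lemma L2_prod_integrable:
  assumes "f \<in> L2" "g \<in> L2"
  shows "integrable lborel (\<lambda>x. cnj (f x) * g x)"
proof (rule Bochner_Integration.integrable_bound)
  show "integrable lborel (\<lambda>x. (cmod (f x))\<^sup>2 + (cmod (g x))\<^sup>2)"
    using L2D[OF assms(1)] L2D[OF assms(2)] by auto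
  have [measurable]: "f \<in> borel_measurable lborel" "g \<in> borel_measurable lborel"
    using L2D assms by auto
  show "(\<lambda>x. cnj (f x) * g x) \<in> borel_measurable lborel" by measurable
  show "AE x in lborel. norm (cnj (f x) * g x) \<le> norm ((cmod (f x))\<^sup>2 + (cmod (g x))\<^sup>2)"
  proof (intro AE_I2)
    fix x
    have "cmod (f x) * cmod (g x) \<le> (cmod (f x))\<^sup>2 + (cmod (g x))\<^sup>2"
      using sq_le_aux[of "cmod (f x)" "cmod (g x)"] by simp
    then show "norm (cnj (f x) * g x) \<le> norm ((cmod (f x))\<^sup>2 + (cmod (g x))\<^sup>2)"
      by (simp add: norm_mult)
  qed
qed

lemma L2_measurable[measurable_dest]: "f \<in> L2 \<Longrightarrow> f \<in> borel_measurable lborel"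
  by (simp add: L2_def)

lemma L2_add: assumes "f \<in> L2" "g \<in> L2" shows "(\<lambda>x. f x + g x) \<in> L2"
proof (rule L2I)
  have [measurable]: "f \<in> borel_measurable lborel" "g \<in> borel_measurable lborel"
    using L2D assms by auto
  show "(\<lambda>x. f x + g x) \<in> borel_measurable lborel" by measurable
  show "integrable lborel (\<lambda>x. (cmod (f x + g x))\<^sup>2)"
  proof (rule Bochner_Integration.integrable_bound)
    show "integrable lborel (\<lambda>x. 2 * (cmod (f x))\<^sup>2 + 2 * (cmod (g x))\<^sup>2)"
      using L2D[OF assms(1)] L2D[OF assms(2)] by auto
    show "(\<lambda>x. (cmod (f x + g x))\<^sup>2) \<in> borel_measurable lborel" by measurable
    show "AE x in lborel. norm ((cmod (f x + g x))\<^sup>2) \<le> norm (2 * (cmod (f x))\<^sup>2 + 2 * (cmod (g x))\<^sup>2)"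
    proof (intro AE_I2)
      fix x
      have t: "cmod (f x + g x) \<le> cmod (f x) + cmod (g x)" by (rule norm_triangle_ineq)
      have "(cmod (f x + g x))\<^sup>2 \<le> (cmod (f x) + cmod (g x))\<^sup>2"
        using t by (intro power_mono) auto
      also have "\<dots> \<le> 2 * (cmod (f x))\<^sup>2 + 2 * (cmod (g x))\<^sup>2"
        by (rule sq_le_aux2)
      finally show "norm ((cmod (f x + g x))\<^sup>2) \<le> norm (2 * (cmod (f x))\<^sup>2 + 2 * (cmod (g x))\<^sup>2)"
        by simp
    qed
  qed
qed

lemma L2_scale: assumes "f \<in> L2" shows "(\<lambda>x. c * f x) \<in> L2"
proof (rule L2I)
  have [measurable]: "f \<in> borel_measurable lborel" using L2D assms by auto
  show "(\<lambda>x. c * f x) \<in> borel_measurable lborel" by measurable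
  have "integrable lborel (\<lambda>x. (cmod c)\<^sup>2 * (cmod (f x))\<^sup>2)"
    using L2D[OF assms] by auto
  then show "integrable lborel (\<lambda>x. (cmod (c * f x))\<^sup>2)"
    by (simp add: norm_mult power_mult_distrib)
qed

lemma L2_diff: assumes "f \<in> L2" "g \<in> L2" shows "(\<lambda>x. f x - g x) \<in> L2"
  using L2_add[OF assms(1) L2_scale[OF assms(2), of "-1"]] by simp

lemma L2_zero: "(\<lambda>x. 0) \<in> L2"
  by (rule L2I) auto

lemma L2_sum: assumes "finite F" "F \<subseteq> L2" shows "(\<lambda>x. \<Sum>e\<in>F. c e * e x) \<in> L2"
  using assms
proof (induction F rule: finite_induct)
  case empty then show ?case using L2_zero by simp
next
  case (insert a F)
  then show ?case using L2_add[OF L2_scale[of a "c a"] insert(3)] by simp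
qed

lemma ip_add_right: assumes "f \<in> L2" "g \<in> L2" "h \<in> L2"
  shows "ip f (\<lambda>x. g x + h x) = ip f g + ip f h"
  unfolding ip_def using L2_prod_integrable[OF assms(1,2)] L2_prod_integrable[OF assms(1,3)]
  by (simp add: distrib_left)

lemma ip_scale_right: "ip f (\<lambda>x. c * g x) = c * ip f g"
  unfolding ip_def by (simp add: mult.left_commute)

lemma ip_diff_right: assumes "f \<in> L2" "g \<in> L2" "h \<in> L2"
  shows "ip f (\<lambda>x. g x - h x) = ip f g - ip f h"
  unfolding ip_def using L2_prod_integrable[OF assms(1,2)] L2_prod_integrable[OF assms(1,3)]
  by (simp add: right_diff_distrib)

lemma ip_cnj: "ip g f = cnj (ip f g)"
proof -
  have "ip g f = (LINT x|lborel. cnj (cnj (f x) * g x))" by (simp add: ip_def mult.commute)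
  also have "\<dots> = cnj (LINT x|lborel. cnj (f x) * g x)" by (rule Bochner_Integration.integral_cnj)
  finally show ?thesis by (simp add: ip_def)
qed

lemma ip_sum_right: assumes "finite F" "F \<subseteq> L2" "f \<in> L2"
  shows "ip f (\<lambda>x. \<Sum>e\<in>F. c e * e x) = (\<Sum>e\<in>F. c e * ip f e)"
proof -
  have "ip f (\<lambda>x. \<Sum>e\<in>F. c e * e x) = (LINT x|lborel. (\<Sum>e\<in>F. c e * (cnj (f x) * e x)))"
    unfolding ip_def by (simp add: sum_distrib_left mult.left_commute)
  also have "\<dots> = (\<Sum>e\<in>F. (LINT x|lborel. c e * (cnj (f x) * e x)))"
    using assms by (intro Bochner_Integration.integral_sum) (auto intro!: L2_prod_integrable)
  also have "\<dots> = (\<Sum>e\<in>F. c e * ip f e)"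
    unfolding ip_def by simp
  finally show ?thesis .
qed

lemma ip_sum_left: assumes "finite F" "F \<subseteq> L2" "f \<in> L2"
  shows "ip (\<lambda>x. \<Sum>e\<in>F. c e * e x) f = (\<Sum>e\<in>F. cnj (c e) * ip e f)"
  apply (subst ip_cnj)
  apply (subst ip_sum_right[OF assms])
  apply (simp add: ip_cnj[of f])
  done

lemma ip_self: "ip f f = of_real (LINT x|lborel. (cmod (f x))\<^sup>2)"
proof -
  have *: "\<And>x. cnj (f x) * f x = of_real ((cmod (f x))\<^sup>2)"
    by (subst complex_norm_square) (simp add: mult.commute)
  have "ip f f = (LINT x|lborel. complex_of_real ((cmod (f x))\<^sup>2))" unfolding ip_def by (simp only: *)
  then show ?thesis by (simp only: integral_complex_of_real)
qed

lemma ip_self_ge0: "0 \<le> Re (ip f f)" "Im (ip f f) = 0"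
  by (auto simp: ip_self)

lemma ip_self_zero: assumes "f \<in> L2" "ip f f = 0" shows "AE x in lborel. f x = 0"
proof -
  have "(LINT x|lborel. (cmod (f x))\<^sup>2) = 0" using assms(2) by (simp add: ip_self)
  then have "AE x in lborel. (cmod (f x))\<^sup>2 = 0"
    using integral_nonneg_eq_0_iff_AE[of lborel "\<lambda>x. (cmod (f x))\<^sup>2"] L2D[OF assms(1)] by auto
  then show ?thesis by auto
qed

lemma ip_ae_zero: assumes "AE x in lborel. f x = 0" shows "ip f g = 0"
proof -
  have "AE x in lborel. cnj (f x) * g x = 0" using assms by auto
  then show ?thesis unfolding ip_def by (rule integral_eq_zero_AE)
qed

definition onset :: "('n::finite) wf set \<Rightarrow> bool" where
  "onset E \<longleftrightarrow> E \<subseteq> L2 \<and> (\<forall>e\<in>E. ip e e = 1) \<and> (\<forall>e\<in>E. \<forall>e'\<in>E. e \<noteq> e' \<longrightarrow> ip e e' = 0)"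

lemma bessel_orth:
  assumes "finite E" "onset E" "\<psi> \<in> L2" "e' \<in> E"
  shows "ip e' (\<lambda>x. \<psi> x - (\<Sum>e\<in>E. ip e \<psi> * e x)) = 0"
proof -
  have E: "E \<subseteq> L2" using assms(2) by (simp add: onset_def)
  have e': "e' \<in> L2" using E assms(4) by auto
  have "ip e' (\<lambda>x. \<psi> x - (\<Sum>e\<in>E. ip e \<psi> * e x)) = ip e' \<psi> - (\<Sum>e\<in>E. ip e \<psi> * ip e' e)"
    using ip_diff_right[OF e' assms(3) L2_sum[OF assms(1) E]] ip_sum_right[OF assms(1) E e'] by simp
  also have "(\<Sum>e\<in>E. ip e \<psi> * ip e' e) = (\<Sum>e\<in>E. if e = e' then ip e' \<psi> else 0)"
    using assms(2,4) unfolding onset_def by (intro sum.cong) auto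
  also have "\<dots> = ip e' \<psi>" using assms(1,4) by simp
  finally show ?thesis by simp
qed

lemma bessel_eq:
  assumes "finite E" "onset E" "\<psi> \<in> L2"
  defines "\<phi> \<equiv> (\<lambda>x. \<psi> x - (\<Sum>e\<in>E. ip e \<psi> * e x))"
  shows "ip \<phi> \<phi> = ip \<psi> \<psi> - of_real (\<Sum>e\<in>E. (cmod (ip e \<psi>))\<^sup>2)"
proof -
  have E: "E \<subseteq> L2" using assms(2) by (simp add: onset_def)
  have S: "(\<lambda>x. \<Sum>e\<in>E. ip e \<psi> * e x) \<in> L2" by (rule L2_sum[OF assms(1) E])
  have phi: "\<phi> \<in> L2" unfolding \<phi>_def by (rule L2_diff[OF assms(3) S])
  have o: "\<And>e. e \<in> E \<Longrightarrow> ip e \<phi> = 0" unfolding \<phi>_def by (rule bessel_orth[OF assms(1,2,3)])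
  have r: "ip \<phi> \<phi> = cnj (ip \<phi> \<phi>)" using ip_self_ge0(2)[of \<phi>] by (simp add: complex_eq_iff)
  have a: "ip \<phi> \<phi> = ip \<phi> \<psi> - (\<Sum>e\<in>E. ip e \<psi> * ip \<phi> e)"
  proof -
    have "ip \<phi> (\<lambda>x. \<psi> x - (\<Sum>e\<in>E. ip e \<psi> * e x)) = ip \<phi> \<psi> - (\<Sum>e\<in>E. ip e \<psi> * ip \<phi> e)"
      using ip_diff_right[OF phi assms(3) S] ip_sum_right[OF assms(1) E phi] by simp
    then show ?thesis by (simp only: \<phi>_def[symmetric])
  qed
  have b: "(\<Sum>e\<in>E. ip e \<psi> * ip \<phi> e) = 0"
    using o by (simp add: ip_cnj[of \<phi>])
  have 1: "ip \<phi> \<phi> = cnj (ip \<phi> \<psi>)" using r a b by simp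
  have "cnj (ip \<phi> \<psi>) = ip \<psi> \<phi>" by (simp add: ip_cnj[of \<psi>])
  also have "ip \<psi> \<phi> = ip \<psi> \<psi> - (\<Sum>e\<in>E. ip e \<psi> * ip \<psi> e)"
    unfolding \<phi>_def using ip_diff_right[OF assms(3) assms(3) S] ip_sum_right[OF assms(1) E assms(3)] by simp
  also have "(\<Sum>e\<in>E. ip e \<psi> * ip \<psi> e) = of_real (\<Sum>e\<in>E. (cmod (ip e \<psi>))\<^sup>2)"
    by (simp add: ip_cnj[of \<psi>] complex_norm_square del: of_real_power)
  finally show ?thesis using 1 by simp
qed

lemma bessel_ineq:
  assumes "finite E" "onset E" "\<psi> \<in> L2"
  shows "(\<Sum>e\<in>E. (cmod (ip e \<psi>))\<^sup>2) \<le> Re (ip \<psi> \<psi>)"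
  using bessel_eq[OF assms] ip_self_ge0(1)[of "(\<lambda>x. \<psi> x - (\<Sum>e\<in>E. ip e \<psi> * e x))"]
  by simp

definition Qpts :: "'a::euclidean_space set" where
  "Qpts = {x. \<forall>i\<in>Basis. x \<bullet> i \<in> \<rat>}"

lemma inner_sum_Basis_fun: "i \<in> Basis \<Longrightarrow> (\<Sum>j\<in>Basis. f j *\<^sub>R j) \<bullet> i = f i"
  for i :: "'a::euclidean_space"
  by (simp add: inner_sum_left inner_Basis if_distrib cong: if_cong)

lemma countable_Qpts: "countable (Qpts :: 'a::euclidean_space set)"
proof -
  have "(Qpts :: 'a set) \<subseteq> (\<lambda>f. \<Sum>j\<in>Basis. f j *\<^sub>R j) ` (Basis \<rightarrow>\<^sub>E \<rat>)"
  proof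
    fix x :: 'a assume x: "x \<in> Qpts"
    have "(\<Sum>j\<in>Basis. (restrict (\<lambda>i. x \<bullet> i) Basis) j *\<^sub>R j) = (\<Sum>j\<in>Basis. (x \<bullet> j) *\<^sub>R j)"
      by (rule sum.cong) auto
    then have "x = (\<Sum>j\<in>Basis. (restrict (\<lambda>i. x \<bullet> i) Basis) j *\<^sub>R j)"
      by (simp add: euclidean_representation)
    moreover have "restrict (\<lambda>i. x \<bullet> i) Basis \<in> Basis \<rightarrow>\<^sub>E \<rat>" using x by (auto simp: Qpts_def)
    ultimately show "x \<in> (\<lambda>f. \<Sum>j\<in>Basis. f j *\<^sub>R j) ` (Basis \<rightarrow>\<^sub>E \<rat>)" by blast
  qed
  moreover have "countable ((\<lambda>f. \<Sum>j\<in>Basis. f j *\<^sub>R (j::'a)) ` (Basis \<rightarrow>\<^sub>E \<rat>))"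
    by (intro countable_image countable_PiE) (auto intro: countable_rat)
  ultimately show ?thesis by (rule countable_subset)
qed

definition Gen :: "'a::euclidean_space set set" where
  "Gen = (\<lambda>(a, b). box a b) ` (Qpts \<times> Qpts)"

lemma Gen_Int_stable: "Int_stable (Gen :: 'a::euclidean_space set set)"
proof (rule Int_stableI)
  fix A B :: "'a set" assume "A \<in> Gen" "B \<in> Gen"
  then obtain a b c d where abcd: "a \<in> Qpts" "b \<in> Qpts" "c \<in> Qpts" "d \<in> Qpts"
    "A = box a b" "B = box c d" by (auto simp: Gen_def)
  define l where "l = (\<Sum>j\<in>Basis. max (a \<bullet> j) (c \<bullet> j) *\<^sub>R j)"
  define u where "u = (\<Sum>j\<in>Basis. min (b \<bullet> j) (d \<bullet> j) *\<^sub>R j)"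
  have l: "i \<in> Basis \<Longrightarrow> l \<bullet> i = max (a \<bullet> i) (c \<bullet> i)" for i unfolding l_def by (rule inner_sum_Basis_fun)
  have u: "i \<in> Basis \<Longrightarrow> u \<bullet> i = min (b \<bullet> i) (d \<bullet> i)" for i unfolding u_def by (rule inner_sum_Basis_fun)
  have "A \<inter> B = box l u" using l u by (auto simp: abcd mem_box)
  moreover have "l \<in> Qpts" "u \<in> Qpts" using abcd l u by (auto simp: Qpts_def max_def min_def)
  ultimately show "A \<inter> B \<in> Gen" by (auto simp: Gen_def)
qed

lemma borel_eq_Gen: "borel = sigma UNIV (Gen :: 'a::euclidean_space set set)"
  unfolding Gen_def
proof (rule borel_eq_sigmaI1[OF borel_def])
  fix M :: "'a set" assume "M \<in> {S. open S}"
  then have "open M" by simp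
  define a' where "a' \<equiv> \<lambda>f :: 'a \<Rightarrow> real \<times> real. (\<Sum>(i::'a)\<in>Basis. fst (f i) *\<^sub>R i)"
  define b' where "b' \<equiv> \<lambda>f :: 'a \<Rightarrow> real \<times> real. (\<Sum>(i::'a)\<in>Basis. snd (f i) *\<^sub>R i)"
  define I where "I \<equiv> {f\<in>Basis \<rightarrow>\<^sub>E \<rat> \<times> \<rat>. box (a' f) (b' f) \<subseteq> M}"
  have M: "M = (\<Union>f\<in>I. box (a' f) (b' f))"
    unfolding a'_def b'_def I_def by (rule open_UNION_box[OF \<open>open M\<close>])
  have cI: "countable I" unfolding I_def
    by (rule countable_subset[of _ "Basis \<rightarrow>\<^sub>E \<rat> \<times> \<rat>"]) (auto intro!: countable_PiE countable_rat)
  have "box (a' f) (b' f) \<in> (\<lambda>(a, b). box a b) ` (Qpts \<times> Qpts)" if "f \<in> I" for f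
  proof -
    have "a' f \<in> Qpts" "b' f \<in> Qpts" using that
      by (auto simp: Qpts_def a'_def b'_def I_def inner_sum_Basis_fun PiE_iff mem_Times_iff)
    then show ?thesis by auto
  qed
  then show "M \<in> sets (sigma UNIV ((\<lambda>(a, b). box a b) ` (Qpts \<times> Qpts)))"
    apply (subst M)
    apply (intro sets.countable_UN' cI)
    apply auto
    done
qed auto

lemma sets_lborel_Gen: "sets (lborel :: 'a::euclidean_space measure) = sigma_sets UNIV Gen"
proof -
  have "sets (lborel :: 'a measure) = sets (sigma UNIV (Gen :: 'a set set))"
    using borel_eq_Gen by (metis sets_lborel)
  also have "\<dots> = sigma_sets UNIV Gen" by (rule sets_measure_of) auto
  finally show ?thesis .
qed

lemma Gen_sets: "A \<in> Gen \<Longrightarrow> A \<in> sets borel" "A \<in> Gen \<Longrightarrow> bounded A"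
  by (auto simp: Gen_def)

lemma L2_indicator: assumes "A \<in> sets borel" "bounded A" shows "(\<lambda>x. indicator A x :: complex) \<in> L2"
proof (rule L2I)
  show "(\<lambda>x. indicator A x :: complex) \<in> borel_measurable lborel" using assms(1) by measurable
  have "integrable lborel (indicator A :: _ \<Rightarrow> real)"
    using assms emeasure_bounded_finite[OF assms(2)] by (intro integrable_real_indicator) auto
  moreover have "(\<lambda>x. (cmod (indicator A x :: complex))\<^sup>2) = (indicator A :: _ \<Rightarrow> real)"
    by (auto split: split_indicator)
  ultimately show "integrable lborel (\<lambda>x. (cmod (indicator A x :: complex))\<^sup>2)" by simp
qed

lemma ip_indicator_left: "ip (\<lambda>x. indicator A x) f = (LINT x|lborel. indicator A x *\<^sub>R f x)"
  unfolding ip_def by (intro Bochner_Integration.integral_cong) (auto split: split_indicator)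

definition cv :: "real \<Rightarrow> 'a::euclidean_space" where "cv t = (\<Sum>j\<in>Basis. t *\<^sub>R j)"

lemma cv_inner: "i \<in> Basis \<Longrightarrow> cv t \<bullet> i = t"
  unfolding cv_def by (rule inner_sum_Basis_fun)

lemma uniqueness_boxes:
  fixes f :: "('n::finite) wf"
  assumes f: "f \<in> L2" and z: "\<And>A. A \<in> Gen \<Longrightarrow> ip (\<lambda>x. indicator A x) f = 0"
  shows "AE x in lborel. f x = 0"
proof -
  define C where "C m = box (cv (- real m)) (cv (real m) :: real^'n)" for m :: nat
  define g where "g m x = indicator (C m) x *\<^sub>R f x" for m x
  have CG: "C m \<in> Gen" for m
    unfolding C_def Gen_def by (auto simp: Qpts_def cv_inner)
  have gi: "integrable lborel (g m)" for m
  proof -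
    have "integrable lborel (\<lambda>x. cnj (indicator (C m) x) * f x)"
      by (rule L2_prod_integrable[OF L2_indicator[OF Gen_sets[OF CG]] f])
    moreover have "(\<lambda>x. cnj (indicator (C m) x) * f x) = g m"
      unfolding g_def by (auto split: split_indicator)
    ultimately show ?thesis by simp
  qed
  have gm[measurable]: "g m \<in> borel_measurable lborel" for m using gi by auto
  have Gpow: "(Gen :: (real^'n) set set) \<subseteq> Pow UNIV" by auto
  have P: "(LINT x|lborel. indicator A x *\<^sub>R g m x) = 0" if A: "A \<in> sigma_sets UNIV Gen" for A m
    using Gen_Int_stable Gpow A
  proof (induction rule: sigma_sets_induct_disjoint)
    case (basic A)
    have "A \<inter> C m \<in> Gen" using Gen_Int_stable basic CG by (auto simp: Int_stable_def)
    then have "ip (\<lambda>x. indicator (A \<inter> C m) x) f = 0" by (rule z)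
    moreover have "(\<lambda>x. indicator A x *\<^sub>R g m x) = (\<lambda>x. indicator (A \<inter> C m) x *\<^sub>R f x)"
      unfolding g_def by (auto split: split_indicator)
    ultimately show ?case by (simp add: ip_indicator_left)
  next
    case empty then show ?case by simp
  next
    case (compl A)
    have As: "A \<in> sets lborel" using compl(1) sets_lborel_Gen by auto
    have "(\<lambda>x. indicator (UNIV - A) x *\<^sub>R g m x) = (\<lambda>x. g m x - indicator A x *\<^sub>R g m x)"
      by (auto split: split_indicator)
    moreover have "(LINT x|lborel. g m x - indicator A x *\<^sub>R g m x) = (LINT x|lborel. g m x) - (LINT x|lborel. indicator A x *\<^sub>R g m x)"
      by (intro Bochner_Integration.integral_diff gi integrable_mult_indicator As)
    moreover have "(LINT x|lborel. g m x) = 0"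
    proof -
      have "(LINT x|lborel. g m x) = ip (\<lambda>x. indicator (C m) x) f"
        by (simp add: ip_indicator_left g_def)
      then show ?thesis using z[OF CG] by simp
    qed
    ultimately show ?case using compl(2) by simp
  next
    case (union A)
    have As: "\<And>i. A i \<in> sets lborel" using union(2) sets_lborel_Gen by auto
    have "(LINT x:(\<Union>i. A i)|lborel. g m x) = (\<Sum>i. (LINT x:(A i)|lborel. g m x))"
    proof (rule lebesgue_integral_countable_add)
      show "A i \<inter> A j = {}" if "i \<noteq> j" for i j using union(1) that by (auto simp: disjoint_family_on_def)
      show "set_integrable lborel (\<Union>i. A i) (g m)" unfolding set_integrable_def
        using As by (intro integrable_mult_indicator gi) auto
    qed (rule As)
    also have "\<dots> = 0" using union(3) by (simp add: set_lebesgue_integral_def)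
    finally show ?case by (simp add: set_lebesgue_integral_def)
  qed
  have "AE x in lborel. g m x = 0" for m
  proof (rule sigma_finite_measure.density_zero[OF sigma_finite_lborel])
    show "integrable lborel (g m)" by (rule gi)
    fix A :: "(real^'n) set" assume "A \<in> sets lborel"
    then have "A \<in> sigma_sets UNIV Gen" using sets_lborel_Gen by auto
    then show "set_lebesgue_integral lborel A (g m) = 0"
      using P unfolding set_lebesgue_integral_def by blast
  qed
  then have "AE x in lborel. \<forall>m. g m x = 0" by (simp add: AE_all_countable)
  then show ?thesis
  proof (rule AE_mp[OF _ AE_I2], intro impI)
    fix x :: "real^'n" assume a: "\<forall>m. g m x = 0"
    define m where "m = nat (ceiling (norm x)) + 1"
    have "norm x < real m" unfolding m_def by linarith
    then have "x \<in> C m" unfolding C_def mem_box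
      using Basis_le_norm[of _ x] by (force simp: cv_inner abs_le_iff)
    then show "f x = 0" using a[rule_format, of m] unfolding g_def by simp
  qed
qed

lemma onset_subset: assumes "onset M" "F \<subseteq> M" shows "onset F"
  using assms unfolding onset_def by (simp add: subset_iff)

lemma onset_L2: "onset M \<Longrightarrow> e \<in> M \<Longrightarrow> e \<in> L2"
  unfolding onset_def by (simp add: subset_iff)

lemma finite_large:
  assumes M: "onset M" and t: "t \<in> L2" and r: "r > 0"
  shows "finite {e\<in>M. r < cmod (ip e t)}"
proof (rule ccontr)
  assume inf: "infinite {e\<in>M. r < cmod (ip e t)}"
  define B where "B = Re (ip t t)"
  obtain N :: nat where N: "B / r\<^sup>2 < real N" using reals_Archimedean2 by blast
  obtain F where F: "finite F" "card F = N" "F \<subseteq> {e\<in>M. r < cmod (ip e t)}"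
    using infinite_arbitrarily_large[OF inf] by blast
  have onF: "onset F" using onset_subset[OF M, of F] F(3) by auto
  have "(\<Sum>e\<in>F. (cmod (ip e t))\<^sup>2) \<le> B" unfolding B_def by (rule bessel_ineq[OF F(1) onF t])
  moreover have "(\<Sum>e\<in>F. r\<^sup>2) \<le> (\<Sum>e\<in>F. (cmod (ip e t))\<^sup>2)"
  proof (rule sum_mono)
    fix e assume "e \<in> F"
    then have "r < cmod (ip e t)" using F(3) by auto
    then show "r\<^sup>2 \<le> (cmod (ip e t))\<^sup>2" using r by (intro power_mono) auto
  qed
  moreover have "(\<Sum>e\<in>F. r\<^sup>2) = real N * r\<^sup>2" using F(2) by simp
  moreover have "B < real N * r\<^sup>2" using N r by (simp add: divide_less_eq)
  ultimately show False by linarith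
qed

lemma countable_nonorth:
  assumes M: "onset M" and t: "t \<in> L2"
  shows "countable {e\<in>M. ip e t \<noteq> 0}"
proof -
  have "{e\<in>M. ip e t \<noteq> 0} \<subseteq> (\<Union>n. {e\<in>M. inverse (real (Suc n)) < cmod (ip e t)})"
  proof
    fix e assume "e \<in> {e\<in>M. ip e t \<noteq> 0}"
    then have "e \<in> M" "0 < cmod (ip e t)" by auto
    then obtain n where "inverse (real (Suc n)) < cmod (ip e t)"
      using reals_Archimedean by blast
    then show "e \<in> (\<Union>n. {e\<in>M. inverse (real (Suc n)) < cmod (ip e t)})" using \<open>e \<in> M\<close> by blast
  qed
  moreover have "countable (\<Union>n. {e\<in>M. inverse (real (Suc n)) < cmod (ip e t)})"
    by (intro countable_UN[OF countableI_type] countable_finite finite_large[OF M t]) auto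
  ultimately show ?thesis by (rule countable_subset)
qed

lemma countable_Gen: "countable (Gen :: 'a::euclidean_space set set)"
  unfolding Gen_def by (intro countable_image countable_SIGMA countable_Qpts)

lemma countable_onset:
  fixes M :: "('n::finite) wf set"
  assumes M: "onset M"
  shows "countable M"
proof -
  define T where "T = (\<lambda>A. (\<lambda>x. indicator A x :: complex)) ` (Gen :: (real^'n) set set)"
  have TL2: "t \<in> L2" if "t \<in> T" for t
    using that unfolding T_def by (auto intro!: L2_indicator Gen_sets)
  have "M \<subseteq> (\<Union>t\<in>T. {e\<in>M. ip e t \<noteq> 0})"
  proof
    fix e assume e: "e \<in> M"
    show "e \<in> (\<Union>t\<in>T. {e\<in>M. ip e t \<noteq> 0})"
    proof (rule ccontr)
      assume "e \<notin> (\<Union>t\<in>T. {e\<in>M. ip e t \<noteq> 0})"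
      then have z: "\<And>t. t \<in> T \<Longrightarrow> ip e t = 0" using e by auto
      have "AE x in lborel. e x = 0"
      proof (rule uniqueness_boxes)
        show "e \<in> L2" by (rule onset_L2[OF M e])
        fix A :: "(real^'n) set" assume "A \<in> Gen"
        then have "ip e (\<lambda>x. indicator A x) = 0" using z unfolding T_def by auto
        then show "ip (\<lambda>x. indicator A x) e = 0" by (simp add: ip_cnj[of "\<lambda>x. indicator A x"])
      qed
      then have "ip e e = 0" by (rule ip_ae_zero)
      moreover have "ip e e = 1" using M e by (simp add: onset_def)
      ultimately show False by simp
    qed
  qed
  moreover have "countable (\<Union>t\<in>T. {e\<in>M. ip e t \<noteq> 0})"
    by (intro countable_UN countable_nonorth[OF M] TL2) (auto simp: T_def intro: countable_image countable_Gen)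
  ultimately show ?thesis by (rule countable_subset)
qed

definition complete_set :: "('n::finite) wf set \<Rightarrow> bool" where
  "complete_set M \<longleftrightarrow> (\<forall>\<psi>\<in>L2. (\<forall>e\<in>M. ip e \<psi> = 0) \<longrightarrow> (AE x in lborel. \<psi> x = 0))"

lemma ip_scale_left: "ip (\<lambda>x. c * f x) g = cnj c * ip f g"
  unfolding ip_def by (simp add: mult.assoc)

lemma ip_indicator_indicator:
  assumes "A \<in> sets borel" "B \<in> sets borel" "bounded A"
  shows "ip (\<lambda>x. indicator A x) (\<lambda>x. indicator B x) = complex_of_real (measure lborel (A \<inter> B))"
proof -
  have "ip (\<lambda>x. indicator A x) (\<lambda>x. indicator B x) = (LINT x|lborel. complex_of_real (indicator (A \<inter> B) x))"
    unfolding ip_def by (intro Bochner_Integration.integral_cong) (auto split: split_indicator)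
  also have "\<dots> = complex_of_real (measure lborel (A \<inter> B))"
    by (simp only: integral_complex_of_real integral_indicator) simp
  finally show ?thesis .
qed

lemma infinite_onset:
  fixes M :: "('n::finite) wf set"
  assumes M: "onset M" and C: "complete_set M"
  shows "infinite M"
proof
  assume fin: "finite M"
  define N where "N = card M"
  define B where "B i = box (cv (real i)) (cv (real i + 1) :: real^'n)" for i :: nat
  define f where "f i = (\<lambda>x. indicator (B i) x :: complex)" for i
  have Bs: "B i \<in> sets borel" "bounded (B i)" for i unfolding B_def by auto
  have fL2: "f i \<in> L2" for i unfolding f_def by (rule L2_indicator[OF Bs])
  obtain b :: "real^'n" where b: "b \<in> Basis" using nonempty_Basis by blast
  have disj: "B i \<inter> B j = {}" if "i \<noteq> j" for i j
  proof (rule ccontr)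
    assume "B i \<inter> B j \<noteq> {}"
    then obtain x where "x \<in> B i" "x \<in> B j" by blast
    then have "real i < x \<bullet> b" "x \<bullet> b < real i + 1" "real j < x \<bullet> b" "x \<bullet> b < real j + 1"
      using b unfolding B_def mem_box by (auto simp: cv_inner)
    then have "i < j + 1" "j < i + 1" by linarith+
    then show False using that by linarith
  qed
  have mB: "measure lborel (B i) = 1" for i
  proof -
    have "emeasure lborel (B i) = (\<Prod>b\<in>Basis. (cv (real i + 1) - cv (real i) :: real^'n) \<bullet> b)"
      unfolding B_def by (rule emeasure_lborel_box) (simp add: cv_inner)
    also have "\<dots> = 1" by (simp add: inner_diff_left cv_inner)
    finally show ?thesis by (simp add: measure_def)
  qed
  have ipf: "ip (f i) (f j) = (if i = j then 1 else 0)" for i j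
    unfolding f_def using ip_indicator_indicator[OF Bs(1) Bs(1) Bs(2), of i j] disj[of i j] mB[of i]
    by (cases "i = j") auto
  have inj: "inj_on f {..N}"
  proof (rule inj_onI)
    fix i j assume "f i = f j"
    then have "ip (f i) (f j) = 1" using ipf[of i i] by simp
    then show "i = j" using ipf[of i j] by (cases "i = j") auto
  qed
  define F where "F = f ` {..N}"
  have onF: "onset F" unfolding onset_def F_def using fL2 ipf by auto
  have finF: "finite F" unfolding F_def by simp
  have one: "(\<Sum>e\<in>M. (cmod (ip e (f i)))\<^sup>2) = 1" for i
  proof -
    define \<phi> where "\<phi> = (\<lambda>x. f i x - (\<Sum>e\<in>M. ip e (f i) * e x))"
    have ML2: "M \<subseteq> L2" using M by (simp add: onset_def)
    have "\<phi> \<in> L2" unfolding \<phi>_def by (intro L2_diff fL2 L2_sum fin ML2)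
    moreover have "\<forall>e\<in>M. ip e \<phi> = 0" unfolding \<phi>_def using bessel_orth[OF fin M fL2] by blast
    ultimately have "AE x in lborel. \<phi> x = 0" using C by (simp add: complete_set_def)
    then have "ip \<phi> \<phi> = 0" by (rule ip_ae_zero)
    then have "ip (f i) (f i) = of_real (\<Sum>e\<in>M. (cmod (ip e (f i)))\<^sup>2)"
      using bessel_eq[OF fin M fL2, of i] unfolding \<phi>_def by simp
    then show ?thesis using ipf[of i i] by (simp del: of_real_sum)
  qed
  have "real (N + 1) = (\<Sum>i\<in>{..N}. \<Sum>e\<in>M. (cmod (ip e (f i)))\<^sup>2)" using one by simp
  also have "\<dots> = (\<Sum>e\<in>M. \<Sum>i\<in>{..N}. (cmod (ip (f i) e))\<^sup>2)"
    by (subst sum.swap) (simp add: ip_cnj[of _ "f _"])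
  also have "\<dots> = (\<Sum>e\<in>M. \<Sum>t\<in>F. (cmod (ip t e))\<^sup>2)"
    unfolding F_def by (subst sum.reindex[OF inj]) simp
  also have "\<dots> \<le> (\<Sum>e\<in>M. Re (ip e e))"
    by (intro sum_mono bessel_ineq[OF finF onF] onset_L2[OF M])
  also have "\<dots> = real N" using M unfolding N_def onset_def by simp
  finally show False by simp
qed

lemma exists_maximal_onset: "\<exists>M :: ('n::finite) wf set. onset M \<and> complete_set M"
proof -
  have "\<exists>M\<in>{M :: 'n wf set. onset M}. \<forall>X\<in>{M. onset M}. M \<subseteq> X \<longrightarrow> X = M"
  proof (rule subset_Zorn')
    fix C assume ch: "subset.chain {M :: 'n wf set. onset M} C"
    show "\<Union>C \<in> {M. onset M}" unfolding mem_Collect_eq onset_def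
    proof (intro conjI ballI impI)
      show "\<Union>C \<subseteq> L2" using ch by (auto simp: subset.chain_def onset_def)
      show "ip e e = 1" if "e \<in> \<Union>C" for e using ch that by (auto simp: subset.chain_def onset_def)
      fix e e' assume "e \<in> \<Union>C" "e' \<in> \<Union>C" "e \<noteq> e'"
      then obtain X Y where XY: "X \<in> C" "Y \<in> C" "e \<in> X" "e' \<in> Y" by blast
      then have "X \<subseteq> Y \<or> Y \<subseteq> X" using ch by (auto simp: subset.chain_def)
      then obtain Z where "Z \<in> C" "e \<in> Z" "e' \<in> Z" using XY by blast
      moreover have "onset Z" using ch \<open>Z \<in> C\<close> by (auto simp: subset.chain_def)
      ultimately show "ip e e' = 0" using \<open>e \<noteq> e'\<close> unfolding onset_def by blast
    qed
  qed
  then obtain M :: "'n wf set" where M: "onset M" and max: "\<And>X. onset X \<Longrightarrow> M \<subseteq> X \<Longrightarrow> X = M"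
    by blast
  have "complete_set M" unfolding complete_set_def
  proof (intro ballI impI)
    fix \<psi> :: "'n wf" assume psi: "\<psi> \<in> L2" and orth: "\<forall>e\<in>M. ip e \<psi> = 0"
    show "AE x in lborel. \<psi> x = 0"
    proof (rule ccontr)
      assume nz: "\<not> (AE x in lborel. \<psi> x = 0)"
      then have "ip \<psi> \<psi> \<noteq> 0" using ip_self_zero[OF psi] by blast
      define r where "r = Re (ip \<psi> \<psi>)"
      have ipr: "ip \<psi> \<psi> = of_real r" unfolding r_def using ip_self_ge0(2)[of \<psi>] by (simp add: complex_eq_iff)
      have r: "r > 0" using ip_self_ge0(1)[of \<psi>] \<open>ip \<psi> \<psi> \<noteq> 0\<close> ipr unfolding r_def
        by (metis less_eq_real_def of_real_0)
      define c where "c = complex_of_real (1 / sqrt r)"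
      define \<psi>' where "\<psi>' = (\<lambda>x. c * \<psi> x)"
      have L: "\<psi>' \<in> L2" unfolding \<psi>'_def by (rule L2_scale[OF psi])
      have n1: "ip \<psi>' \<psi>' = 1"
      proof -
        have "ip \<psi>' \<psi>' = cnj c * c * ip \<psi> \<psi>"
          unfolding \<psi>'_def ip_scale_right ip_scale_left by simp
        also have "\<dots> = 1" using r unfolding c_def ipr
          by (simp flip: of_real_mult)
        finally show ?thesis .
      qed
      have o1: "ip e \<psi>' = 0" if "e \<in> M" for e
        unfolding \<psi>'_def ip_scale_right using orth that by simp
      have o2: "ip \<psi>' e = 0" if "e \<in> M" for e
        using o1[OF that] by (simp add: ip_cnj[of \<psi>'])
      have notin: "\<psi>' \<notin> M" using o1 n1 by force
      have "onset (insert \<psi>' M)" using M L n1 o1 o2 unfolding onset_def by auto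
      then have "insert \<psi>' M = M" using max by blast
      then show False using notin by blast
    qed
  qed
  then show ?thesis using M by blast
qed

lemma exists_onb: "\<exists>e :: nat \<Rightarrow> ('n::finite) wf. onb_seq e"
proof -
  obtain M :: "'n wf set" where M: "onset M" and C: "complete_set M" using exists_maximal_onset by blast
  have cM: "countable M" by (rule countable_onset[OF M])
  have iM: "infinite M" by (rule infinite_onset[OF M C])
  define e where "e = from_nat_into M"
  have bij: "bij_betw e UNIV M" unfolding e_def by (rule bij_betw_from_nat_into[OF cM iM])
  have eM: "e k \<in> M" for k using bij by (auto simp: bij_betw_def)
  have inj: "inj e" using bij by (auto simp: bij_betw_def)
  show ?thesis
  proof (intro exI[of _ e])
    show "onb_seq e" unfolding onb_seq_def
    proof (intro conjI allI ballI impI)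
      show "e k \<in> L2" for k by (rule onset_L2[OF M eM])
      show "ip (e j) (e k) = (if j = k then 1 else 0)" for j k
      proof (cases "j = k")
        case True then show ?thesis using M eM unfolding onset_def by simp
      next
        case False
        then have "e j \<noteq> e k" using inj by (auto dest: injD)
        then show ?thesis using M eM False unfolding onset_def by simp
      qed
      fix \<psi> :: "'n wf" assume psi: "\<psi> \<in> L2" and o: "\<forall>k. ip (e k) \<psi> = 0"
      have "\<forall>m\<in>M. ip m \<psi> = 0"
      proof
        fix m assume "m \<in> M"
        then obtain k where "m = e k" using bij by (auto simp: bij_betw_def)
        then show "ip m \<psi> = 0" using o by simp
      qed
      then show "ae_eq \<psi> (\<lambda>_. 0)" using C psi unfolding complete_set_def ae_eq_def by blast
    qed
  qed
qed

lemma transl_integral: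
  fixes h :: "real^'n::finite \<Rightarrow> 'b::{banach, second_countable_topology}"
  assumes h: "h \<in> borel_measurable lborel"
  shows "(LINT x|lborel. h (x + a)) = (LINT x|lborel. h x)"
    and "integrable lborel (\<lambda>x. h (x + a)) \<longleftrightarrow> integrable lborel h"
proof -
  have hb: "h \<in> borel_measurable borel" using h by simp
  have m: "(+) a \<in> measurable lborel borel" by simp
  have "(LINT x|lborel. h x) = integral\<^sup>L (distr lborel borel ((+) a)) h"
    by (simp add: lborel_distr_plus)
  also have "\<dots> = (LINT x|lborel. h (a + x))" by (rule integral_distr[OF m hb])
  finally show "(LINT x|lborel. h (x + a)) = (LINT x|lborel. h x)" by (simp add: add.commute)
  have "integrable lborel h \<longleftrightarrow> integrable (distr lborel borel ((+) a)) h"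
    by (simp add: lborel_distr_plus)
  also have "\<dots> \<longleftrightarrow> integrable lborel (\<lambda>x. h (a + x))" by (rule integrable_distr_eq[OF m hb])
  finally show "integrable lborel (\<lambda>x. h (x + a)) \<longleftrightarrow> integrable lborel h" by (simp add: add.commute)
qed

lemma disp_eq: "disp \<xi> \<psi> = (\<lambda>x. exp (- \<i> * complex_of_real (inner (\<chi> j. \<xi> $ Inl j) (\<chi> j. \<xi> $ Inr j) / 2))
   * exp (- \<i> * complex_of_real (inner (\<chi> j. \<xi> $ Inr j) x)) * \<psi> (x + (\<chi> j. \<xi> $ Inl j)))"
  unfolding disp_def Let_def by simp

lemma disp_L2: assumes "\<psi> \<in> L2" shows "disp \<xi> \<psi> \<in> L2"
proof (rule L2I)
  define a :: "real^'a" where "a = (\<chi> j. \<xi> $ Inl j)"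
  define b :: "real^'a" where "b = (\<chi> j. \<xi> $ Inr j)"
  have [measurable]: "\<psi> \<in> borel_measurable lborel" using assms by (rule L2D)
  have "(\<lambda>x. \<psi> (x + a)) \<in> borel_measurable lborel" by measurable
  then show "disp \<xi> \<psi> \<in> borel_measurable lborel" unfolding disp_eq a_def[symmetric] b_def[symmetric]
    by (intro borel_measurable_times borel_measurable_continuous_on[where f=exp] borel_measurable_continuous_on[where f="\<lambda>x. exp (- \<i> * complex_of_real (inner b x))"])
      (auto intro!: continuous_intros)
  have "(\<lambda>x. (cmod (disp \<xi> \<psi> x))\<^sup>2) = (\<lambda>x. (cmod (\<psi> (x + a)))\<^sup>2)"
    unfolding disp_eq a_def[symmetric] b_def[symmetric] by (simp add: norm_mult)
  moreover have "integrable lborel (\<lambda>x. (cmod (\<psi> (x + a)))\<^sup>2)"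
    using transl_integral(2)[of "\<lambda>x. (cmod (\<psi> x))\<^sup>2" a] L2D[OF assms] by simp
  ultimately show "integrable lborel (\<lambda>x. (cmod (disp \<xi> \<psi> x))\<^sup>2)" by simp
qed

lemma ip_disp: assumes "\<phi> \<in> L2" "\<psi> \<in> L2" shows "ip (disp \<xi> \<phi>) (disp \<xi> \<psi>) = ip \<phi> \<psi>"
proof -
  define a :: "real^'a" where "a = (\<chi> j. \<xi> $ Inl j)"
  define b :: "real^'a" where "b = (\<chi> j. \<xi> $ Inr j)"
  have [measurable]: "\<psi> \<in> borel_measurable lborel" "\<phi> \<in> borel_measurable lborel" using L2D(1)[OF assms(1)] L2D(1)[OF assms(2)] by auto
  have u: "cnj (exp (- \<i> * complex_of_real t)) * exp (- \<i> * complex_of_real t) = 1" for t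
  proof -
    have "cnj z * z = of_real ((cmod z)\<^sup>2)" for z by (subst complex_norm_square) (simp add: mult.commute)
    moreover have "cmod (exp (- \<i> * complex_of_real t)) = 1" by simp
    ultimately show ?thesis by simp
  qed
  have "\<And>x. cnj (disp \<xi> \<phi> x) * disp \<xi> \<psi> x = cnj (\<phi> (x + a)) * \<psi> (x + a)"
  proof -
    fix x
    have "cnj (disp \<xi> \<phi> x) * disp \<xi> \<psi> x =
      (cnj (exp (- \<i> * complex_of_real (inner a b / 2))) * exp (- \<i> * complex_of_real (inner a b / 2)))
      * (cnj (exp (- \<i> * complex_of_real (inner b x))) * exp (- \<i> * complex_of_real (inner b x)))
      * (cnj (\<phi> (x + a)) * \<psi> (x + a))"
      unfolding disp_eq a_def[symmetric] b_def[symmetric] by (simp only: complex_cnj_mult mult_ac)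
    then show "cnj (disp \<xi> \<phi> x) * disp \<xi> \<psi> x = cnj (\<phi> (x + a)) * \<psi> (x + a)" by (simp only: u) simp
  qed
  then have "ip (disp \<xi> \<phi>) (disp \<xi> \<psi>) = (LINT x|lborel. cnj (\<phi> (x + a)) * \<psi> (x + a))"
    unfolding ip_def by simp
  also have "\<dots> = ip \<phi> \<psi>" unfolding ip_def
    by (rule transl_integral(1)[of "\<lambda>x. cnj (\<phi> x) * \<psi> x"]) measurable
  finally show ?thesis .
qed

lemma partial_le_tnorm:
  fixes e g :: "nat \<Rightarrow> ('n::finite) wf"
  assumes eL: "\<And>k. e k \<in> L2" and gL: "\<And>k. g k \<in> L2"
    and eo: "\<And>j k. ip (e j) (e k) = (if j = k then 1 else 0)"
    and go: "\<And>j k. ip (g j) (g k) = (if j = k then 1 else 0)"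
  shows "ennreal (\<Sum>i<N. cmod (ip (e i) (T (g i)))) \<le> tnorm T"
proof -
  define p where "p = (map g [0..<N], map e [0..<N])"
  have "p \<in> {(es, fs). orthonormal_list es \<and> orthonormal_list fs \<and> length es = length fs}"
    unfolding p_def orthonormal_list_def using eL gL eo go by auto
  then have "ennreal (\<Sum>i<length (fst p). cmod (ip (snd p ! i) (T (fst p ! i)))) \<le> tnorm T"
    unfolding tnorm_def by (rule SUP_upper)
  moreover have "(\<Sum>i<length (fst p). cmod (ip (snd p ! i) (T (fst p ! i)))) = (\<Sum>i<N. cmod (ip (e i) (T (g i))))"
    unfolding p_def by (intro sum.cong) auto
  ultimately show ?thesis by simp
qed

definition e0 :: "nat \<Rightarrow> ('n::finite) wf" where "e0 = (SOME e. onb_seq e)"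

lemma e0_onb: "onb_seq e0"
  unfolding e0_def using exists_onb by (rule someI_ex)

lemma e0_L2: "e0 k \<in> L2"
  using e0_onb unfolding onb_seq_def by blast

lemma e0_orth: "ip (e0 j) (e0 k) = (if j = k then 1 else 0)"
  using e0_onb unfolding onb_seq_def by blast

lemmas e0_props = e0_L2 e0_orth

lemma trace_disp: "trace (\<lambda>\<psi>. A (disp \<xi> \<psi>)) = (\<Sum>k. ip (e0 k) (A (disp \<xi> (e0 k))))"
  unfolding trace_def e0_def Let_def by simp

lemma trace_class_L2: "trace_class A \<Longrightarrow> \<psi> \<in> L2 \<Longrightarrow> A \<psi> \<in> L2"
  unfolding trace_class_def lin_op_def by blast

lemma le_enn2real: assumes "ennreal x \<le> t" "t \<noteq> \<infinity>" "0 \<le> x" shows "x \<le> enn2real t"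
  using enn2real_mono[OF assms(1)] assms(2,3) by (simp add: less_top)

lemma partial_e0:
  "ennreal (\<Sum>i<N. cmod (ip (e0 i) (T (disp \<xi> (e0 i))))) \<le> tnorm T"
  by (rule partial_le_tnorm[OF e0_L2 disp_L2[OF e0_L2] e0_orth]) (simp add: ip_disp[OF e0_L2 e0_L2] e0_orth)

lemma trace_summable:
  assumes A: "trace_class A"
  shows "summable (\<lambda>k. ip (e0 k) (A (disp \<xi> (e0 k))))"
proof (rule summable_norm_cancel, rule summableI_nonneg_bounded)
  have fin: "tnorm A < \<infinity>" using A by (simp add: trace_class_def)
  show "(\<Sum>i<n. norm (ip (e0 i) (A (disp \<xi> (e0 i))))) \<le> enn2real (tnorm A)" for n
  proof -
    show ?thesis using fin by (intro le_enn2real partial_e0 sum_nonneg norm_ge_zero) auto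
  qed
qed simp

lemma trace_diff_bound:
  assumes A: "trace_class A" and B: "trace_class B"
  shows "ennreal (cmod (trace (\<lambda>\<psi>. A (disp \<xi> \<psi>)) - trace (\<lambda>\<psi>. B (disp \<xi> \<psi>))))
     \<le> tnorm (\<lambda>\<psi> x. A \<psi> x - B \<psi> x)"
proof (cases "tnorm (\<lambda>\<psi> x. A \<psi> x - B \<psi> x) = \<infinity>")
  case True then show ?thesis by simp
next
  case False
  define R where "R = enn2real (tnorm (\<lambda>\<psi> x. A \<psi> x - B \<psi> x))"
  define c where "c k = ip (e0 k) (A (disp \<xi> (e0 k))) - ip (e0 k) (B (disp \<xi> (e0 k)))" for k
  have sA: "summable (\<lambda>k. ip (e0 k) (A (disp \<xi> (e0 k))))" by (rule trace_summable[OF A])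
  have sB: "summable (\<lambda>k. ip (e0 k) (B (disp \<xi> (e0 k))))" by (rule trace_summable[OF B])
  have eq: "trace (\<lambda>\<psi>. A (disp \<xi> \<psi>)) - trace (\<lambda>\<psi>. B (disp \<xi> \<psi>)) = (\<Sum>k. c k)"
    unfolding trace_disp c_def by (rule suminf_diff[OF sA sB])
  have sc: "summable c" unfolding c_def by (rule summable_diff[OF sA sB])
  have cdef: "c k = ip (e0 k) ((\<lambda>\<psi> x. A \<psi> x - B \<psi> x) (disp \<xi> (e0 k)))" for k
    unfolding c_def
    by (rule ip_diff_right[symmetric, OF e0_L2 trace_class_L2[OF A disp_L2[OF e0_L2]] trace_class_L2[OF B disp_L2[OF e0_L2]]])
  have bound: "cmod (\<Sum>i<n. c i) \<le> R" for n
  proof -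
    have "ennreal (\<Sum>i<n. cmod (c i)) \<le> tnorm (\<lambda>\<psi> x. A \<psi> x - B \<psi> x)"
      unfolding cdef by (rule partial_e0)
    then have "(\<Sum>i<n. cmod (c i)) \<le> R" unfolding R_def using False
      by (intro le_enn2real sum_nonneg norm_ge_zero) auto
    moreover have "cmod (\<Sum>i<n. c i) \<le> (\<Sum>i<n. cmod (c i))" by (rule norm_sum)
    ultimately show ?thesis by linarith
  qed
  have "(\<lambda>n. cmod (\<Sum>i<n. c i)) \<longlonglongrightarrow> cmod (\<Sum>k. c k)"
    by (intro tendsto_norm summable_LIMSEQ sc)
  then have "cmod (\<Sum>k. c k) \<le> R" by (rule LIMSEQ_le_const2) (use bound in auto)
  then have "ennreal (cmod (\<Sum>k. c k)) \<le> ennreal R" by (rule ennreal_leI)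
  also have "ennreal R = tnorm (\<lambda>\<psi> x. A \<psi> x - B \<psi> x)" unfolding R_def using False
    by (simp add: ennreal_enn2real_if)
  finally show ?thesis unfolding eq .
qed

lemma sum_UNIV_Plus: "(\<Sum>i\<in>(UNIV :: ('a::finite + 'b::finite) set). g i) = (\<Sum>a\<in>UNIV. g (Inl a)) + (\<Sum>b\<in>UNIV. g (Inr b))"
  using sum.Plus[of "UNIV :: 'a set" "UNIV :: 'b set" g] by (simp add: o_def)

lemma if_mult_real: "(if P then a else b) * (c::real) = (if P then a * c else b * c)" by simp

lemma delta_sum: fixes y :: "'a::finite \<Rightarrow> real" shows "(\<Sum>b\<in>UNIV. (if a = b then c else 0) * (y b::real)) = c * y a"
proof -
  have "(\<Sum>b\<in>UNIV. (if a = b then c else 0) * y b) = (\<Sum>b\<in>UNIV. if a = b then c * y b else 0)"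
    by (rule sum.cong) auto
  then show ?thesis by (simp add: sum.delta sum.delta')
qed

lemma Omega_mult_Inl: "(Omega *v x) $ Inl a = x $ Inr a"
  unfolding matrix_vector_mult_def Omega_def
  by (simp add: sum_UNIV_Plus delta_sum)

lemma Omega_mult_Inr: "(Omega *v x) $ Inr a = - x $ Inl a"
  unfolding matrix_vector_mult_def Omega_def
  by (simp add: sum_UNIV_Plus delta_sum)

definition Jm :: "real^('n::finite + 'n) \<Rightarrow> real^('n + 'n)" where
  "Jm x = (\<chi> i. case i of Inl a \<Rightarrow> - x $ Inr a | Inr a \<Rightarrow> x $ Inl a)"

lemma Omega_Jm: "Omega *v Jm x = x"
  unfolding vec_eq_iff
proof
  fix i show "(Omega *v Jm x) $ i = x $ i"
    by (cases i) (simp_all add: Omega_mult_Inl Omega_mult_Inr Jm_def)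
qed

lemma norm_Jm: "norm (Jm x) = norm x"
proof -
  have "inner (Jm x) (Jm x) = inner x x"
    unfolding inner_vec_def by (simp add: sum_UNIV_Plus Jm_def add.commute)
  then show ?thesis by (simp add: norm_eq_sqrt_inner)
qed

lemma Jm_scale: "Jm (c *\<^sub>R x) = c *\<^sub>R Jm x"
  by (simp add: vec_eq_iff Jm_def split: sum.split)

definition chiG :: "real^('n::finite + 'n)^('n + 'n) \<Rightarrow> real^('n + 'n) \<Rightarrow> real^('n + 'n) \<Rightarrow> complex" where
  "chiG V s \<xi> = exp (complex_of_real (- (1/4) * inner (Omega *v \<xi>) (V *v (Omega *v \<xi>)))
             + \<i> * complex_of_real (inner s (Omega *v \<xi>)))"

lemma chiG_0: "chiG V s 0 = 1"
  by (simp add: chiG_def)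

lemma isCont_mv[continuous_intros]:
  fixes A :: "real^'n::finite^'m::finite"
  shows "isCont f z \<Longrightarrow> isCont (\<lambda>x. A *v f x) z"
  by (rule bounded_linear.isCont[OF matrix_vector_mul_bounded_linear])

lemma isCont_chiG: "isCont (chiG V s) x"
  unfolding chiG_def by (intro continuous_intros)

lemma QCM_psd: assumes "V \<in> QCM" shows "0 \<le> inner z (V *v z)"
proof -
  define w :: "complex^('a + 'a)" where "w = (\<chi> j. complex_of_real (z $ j))"
  have "0 \<le> Re (\<Sum>j\<in>UNIV. \<Sum>k\<in>UNIV.
         cnj (w $ j) * (complex_of_real (V $ j $ k) - \<i> * complex_of_real (Omega $ j $ k)) * w $ k)"
    using assms unfolding QCM_def by blast
  also have "\<dots> = (\<Sum>j\<in>UNIV. \<Sum>k\<in>UNIV. z $ j * V $ j $ k * z $ k)"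
    unfolding w_def by (simp add: Re_sum)
  also have "\<dots> = inner z (V *v z)"
    unfolding inner_vec_def matrix_vector_mult_def by (simp add: sum_distrib_left mult_ac)
  finally show ?thesis .
qed

lemma QCM_sym: assumes "V \<in> QCM" shows "transpose V = V"
  using assms unfolding QCM_def by blast

lemma sym_inner: assumes "transpose V = V" shows "inner w (V *v u) = inner u (V *v (w :: real^'m::finite))"
proof -
  have "inner w (V *v u) = inner (w v* V) u" by (simp add: dot_lmul_matrix)
  also have "w v* V = V *v w" using vector_transpose_matrix[of w V] assms by simp
  finally show ?thesis by (simp add: inner_commute)
qed

lemma polar: assumes "transpose V = V"
  shows "inner (u + w) (V *v (u + w)) - inner (u - w) (V *v (u - w)) = 4 * inner u (V *v (w :: real^'m::finite))"
  using sym_inner[OF assms, of w u]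
  by (simp add: matrix_vector_right_distrib matrix_vector_mult_diff_distrib inner_add_left inner_add_right
      inner_diff_left inner_diff_right)

lemma entry_axis: "inner (axis j 1) (V *v axis k 1) = V $ j $ (k :: 'm::finite)"
  for V :: "real^'m^'m"
  by (simp add: matrix_vector_mult_basis inner_axis' column_def)

lemma chiG_norm: "cmod (chiG V s \<xi>) = exp (- (1/4) * inner (Omega *v \<xi>) (V *v (Omega *v \<xi>)))"
  unfolding chiG_def by simp

lemma chiG_qbound:
  assumes "cmod (chiG V s \<xi> - 1) < 1/2"
  shows "inner (Omega *v \<xi>) (V *v (Omega *v \<xi>)) < 4"
proof (rule ccontr)
  define q where "q = inner (Omega *v \<xi>) (V *v (Omega *v \<xi>))"
  assume "\<not> inner (Omega *v \<xi>) (V *v (Omega *v \<xi>)) < 4"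
  then have q: "4 \<le> q" unfolding q_def by simp
  have "1 - cmod (chiG V s \<xi> - 1) \<le> cmod (chiG V s \<xi>)"
    using norm_triangle_ineq2[of 1 "1 - chiG V s \<xi>"] by (simp add: norm_minus_commute)
  then have gt: "1/2 < exp (- (1/4) * q)" using assms unfolding chiG_norm q_def by linarith
  have "exp (- (1/4) * q) \<le> exp (-1)" using q by simp
  also have "exp (-1::real) = inverse (exp 1)" by (simp add: exp_minus)
  also have "\<dots> \<le> 1/2"
  proof -
    have "2 \<le> exp (1::real)" using exp_ge_add_one_self[of "1::real"] by simp
    then show ?thesis by (simp add: inverse_eq_divide divide_le_eq)
  qed
  finally show False using gt by simp
qed

lemma chiG_phase:
  assumes "inner s (Omega *v \<xi>) = pi"
  shows "1 \<le> cmod (chiG V s \<xi> - 1)"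
proof -
  define r where "r = exp (- (1/4) * inner (Omega *v \<xi>) (V *v (Omega *v \<xi>)))"
  have "chiG V s \<xi> = exp (complex_of_real (- (1/4) * inner (Omega *v \<xi>) (V *v (Omega *v \<xi>)))) * exp (\<i> * complex_of_real pi)"
    unfolding chiG_def assms by (simp only: exp_add)
  also have "\<dots> = - complex_of_real r" unfolding r_def exp_of_real exp_pi_i' by simp
  finally have "chiG V s \<xi> - 1 = - complex_of_real (r + 1)" by simp
  then have "cmod (chiG V s \<xi> - 1) = r + 1" unfolding r_def
    by (simp only: norm_minus_cancel norm_of_real) simp
  moreover have "0 < r" unfolding r_def by simp
  ultimately show ?thesis by simp
qed

lemma QCM_bounds:
  assumes V: "V \<in> QCM" and d: "0 < \<delta>"
    and near: "\<And>\<xi>. norm \<xi> < \<delta> \<Longrightarrow> cmod (chiG V s \<xi> - 1) < 1/2"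
  shows "\<bar>V $ j $ l\<bar> \<le> 16 / \<delta>\<^sup>2" and "norm s \<le> pi / \<delta>"
proof -
  have qb: "inner \<eta> (V *v \<eta>) < 4" if "norm \<eta> < \<delta>" for \<eta>
    using chiG_qbound[OF near, of "Jm \<eta>"] that by (simp add: norm_Jm Omega_Jm)
  have q0: "0 \<le> inner \<eta> (V *v \<eta>)" for \<eta> by (rule QCM_psd[OF V])
  define t where "t = \<delta> / 4"
  have t: "0 < t" using d by (simp add: t_def)
  define u where "u = t *\<^sub>R axis j (1::real)"
  define w where "w = t *\<^sub>R axis l (1::real)"
  have nu: "norm u = t" "norm w = t" using t by (simp_all add: u_def w_def)
  have "norm (u + w) \<le> 2 * t" using norm_triangle_ineq[of u w] nu by simp
  then have "norm (u + w) < \<delta>" using t by (simp add: t_def)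
  then have a1: "inner (u + w) (V *v (u + w)) < 4" by (rule qb)
  have "norm (u - w) \<le> 2 * t" using norm_triangle_ineq4[of u w] nu by simp
  then have "norm (u - w) < \<delta>" using t by (simp add: t_def)
  then have a2: "inner (u - w) (V *v (u - w)) < 4" by (rule qb)
  have "4 * inner u (V *v w) = inner (u + w) (V *v (u + w)) - inner (u - w) (V *v (u - w))"
    by (rule polar[OF QCM_sym[OF V], symmetric])
  then have "\<bar>inner u (V *v w)\<bar> < 1" using a1 a2 q0[of "u + w"] q0[of "u - w"] by linarith
  moreover have "inner u (V *v w) = t\<^sup>2 * V $ j $ l"
    unfolding u_def w_def by (simp add: matrix_vector_mult_scaleR entry_axis power2_eq_square)
  ultimately have "t\<^sup>2 * \<bar>V $ j $ l\<bar> < 1" by (simp add: abs_mult)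
  then have "\<bar>V $ j $ l\<bar> < 1 / t\<^sup>2" using t by (simp add: field_simps)
  then show "\<bar>V $ j $ l\<bar> \<le> 16 / \<delta>\<^sup>2" by (simp add: t_def power_divide)
  show "norm s \<le> pi / \<delta>"
  proof (rule ccontr)
    assume "\<not> norm s \<le> pi / \<delta>"
    then have big: "pi / \<delta> < norm s" by simp
    then have ns: "0 < norm s" using d pi_gt_zero by (smt (verit) divide_pos_pos)
    define c where "c = pi / (norm s)\<^sup>2"
    define y where "y = c *\<^sub>R s"
    have "inner s (Omega *v Jm y) = pi"
      unfolding Omega_Jm y_def c_def using ns by (simp add: power2_norm_eq_inner[symmetric])
    then have "1 \<le> cmod (chiG V s (Jm y) - 1)" by (rule chiG_phase)
    moreover have "norm (Jm y) < \<delta>"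
    proof -
      have "norm (Jm y) = pi / norm s" unfolding norm_Jm y_def c_def using ns
        by (simp add: power2_eq_square)
      also have "\<dots> < \<delta>" using big d ns by (simp add: field_simps)
      finally show ?thesis .
    qed
    ultimately show False using near by fastforce
  qed
qed

lemma tendsto_mv:
  fixes A :: "'b \<Rightarrow> real^'n::finite^'m::finite"
  assumes "(A \<longlongrightarrow> A0) F"
  shows "((\<lambda>x. A x *v y) \<longlongrightarrow> A0 *v y) F"
proof (rule vec_tendstoI)
  fix i
  show "((\<lambda>x. (A x *v y) $ i) \<longlongrightarrow> (A0 *v y) $ i) F"
    unfolding matrix_vector_mult_def using assms by (simp; intro tendsto_intros)
qed

lemma norm_matrix_le: "norm (V :: real^'n::finite^'m::finite) \<le> (\<Sum>j\<in>UNIV. \<Sum>l\<in>UNIV. \<bar>V $ j $ l\<bar>)"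
proof -
  have "norm V = L2_set (\<lambda>j. norm (V $ j)) UNIV" by (simp add: norm_vec_def)
  also have "\<dots> \<le> (\<Sum>j\<in>UNIV. norm (V $ j))" by (rule L2_set_le_sum) simp
  also have "\<dots> \<le> (\<Sum>j\<in>UNIV. \<Sum>l\<in>UNIV. \<bar>V $ j $ l\<bar>)" by (intro sum_mono norm_le_l1_cart)
  finally show ?thesis .
qed

theorem lemmaA1:
  fixes V :: "nat \<Rightarrow> real^('n::finite + 'n)^('n + 'n)"
    and s :: "nat \<Rightarrow> real^('n + 'n)"
    and \<rho>s :: "nat \<Rightarrow> 'n op"
    and \<rho> :: "'n op"
  assumes "\<And>k. V k \<in> QCM"
    and "\<And>k. is_gaussian (V k) (s k) (\<rho>s k)"
    and "trace_class \<rho>"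
    and "(\<lambda>k. tnorm (\<lambda>\<psi> x. \<rho>s k \<psi> x - \<rho> \<psi> x)) \<longlonglongrightarrow> 0"
  shows "\<rho> \<in> Gaussian_states"
proof -
  define chr where "chr \<xi> = trace (\<lambda>\<psi>. \<rho> (disp \<xi> \<psi>))" for \<xi>
  define t where "t k = tnorm (\<lambda>\<psi> x. \<rho>s k \<psi> x - \<rho> \<psi> x)" for k
  have tc: "trace_class (\<rho>s k)" for k using assms(2) unfolding is_gaussian_def by blast
  have chik: "trace (\<lambda>\<psi>. \<rho>s k (disp \<xi> \<psi>)) = chiG (V k) (s k) \<xi>" for k \<xi>
    using assms(2) unfolding is_gaussian_def chiG_def by blast
  have close: "ennreal (cmod (chiG (V k) (s k) \<xi> - chr \<xi>)) \<le> t k" for k \<xi>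
    using trace_diff_bound[OF tc assms(3), of k \<xi>] unfolding chik chr_def t_def .
  have t0: "t \<longlonglongrightarrow> 0" using assms(4) unfolding t_def .
  have conv: "(\<lambda>k. chiG (V k) (s k) \<xi>) \<longlonglongrightarrow> chr \<xi>" for \<xi>
  proof (rule tendstoI)
    fix e :: real assume e: "0 < e"
    have "eventually (\<lambda>k. t k < ennreal e) sequentially"
      using order_tendstoD(2)[OF t0, of "ennreal e"] e by simp
    then show "eventually (\<lambda>k. dist (chiG (V k) (s k) \<xi>) (chr \<xi>) < e) sequentially"
    proof (rule eventually_mono)
      fix k assume "t k < ennreal e"
      then have "ennreal (cmod (chiG (V k) (s k) \<xi> - chr \<xi>)) < ennreal e" using close[of k \<xi>] by simp
      then show "dist (chiG (V k) (s k) \<xi>) (chr \<xi>) < e" by (simp add: dist_norm ennreal_less_iff)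
    qed
  qed
  have "eventually (\<lambda>k. t k < ennreal (1/8)) sequentially"
    using order_tendstoD(2)[OF t0, of "ennreal (1/8)"] by simp
  then obtain K where K: "\<And>k. k \<ge> K \<Longrightarrow> t k < ennreal (1/8)"
    unfolding eventually_sequentially by blast
  have unif: "cmod (chiG (V k) (s k) \<xi> - chr \<xi>) < 1/8" if "k \<ge> K" for k \<xi>
  proof -
    have "ennreal (cmod (chiG (V k) (s k) \<xi> - chr \<xi>)) < ennreal (1/8)" using close[of k \<xi>] K[OF that] by simp
    then show ?thesis by (simp add: ennreal_less_iff)
  qed
  have "isCont (chiG (V K) (s K)) 0" by (rule isCont_chiG)
  then have "(chiG (V K) (s K)) \<midarrow>0\<rightarrow> 1" by (simp add: isCont_def chiG_0)
  then obtain \<delta> where d: "0 < \<delta>" and dK: "\<And>\<xi>. \<xi> \<noteq> 0 \<and> norm (\<xi> - 0) < \<delta> \<Longrightarrow> norm (chiG (V K) (s K) \<xi> - 1) < 1/4"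
    unfolding LIM_eq by (metis (no_types, lifting) zero_less_divide_iff zero_less_numeral zero_less_one)
  have dK': "cmod (chiG (V K) (s K) \<xi> - 1) < 1/4" if "norm \<xi> < \<delta>" for \<xi>
    using dK[of \<xi>] that by (cases "\<xi> = 0") (auto simp: chiG_0)
  have near: "cmod (chiG (V k) (s k) \<xi> - 1) < 1/2" if "k \<ge> K" "norm \<xi> < \<delta>" for k \<xi>
  proof -
    have "chiG (V k) (s k) \<xi> - 1 = (chiG (V k) (s k) \<xi> - chr \<xi>) + (chr \<xi> - chiG (V K) (s K) \<xi>) + (chiG (V K) (s K) \<xi> - 1)"
      by simp
    then have "cmod (chiG (V k) (s k) \<xi> - 1) \<le> cmod (chiG (V k) (s k) \<xi> - chr \<xi>) + cmod (chr \<xi> - chiG (V K) (s K) \<xi>) + cmod (chiG (V K) (s K) \<xi> - 1)"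
      by (metis norm_triangle_ineq order_trans add_right_mono)
    moreover have "cmod (chr \<xi> - chiG (V K) (s K) \<xi>) < 1/8" using unif[of K \<xi>] by (simp add: norm_minus_commute)
    ultimately show ?thesis using unif[OF that(1), of \<xi>] dK'[OF that(2)] by linarith
  qed
  have Vb: "\<bar>V k $ j $ l\<bar> \<le> 16 / \<delta>\<^sup>2" and sb: "norm (s k) \<le> pi / \<delta>" if "k \<ge> K" for k j l
    using QCM_bounds[OF assms(1) d near[OF that]] by auto
  define X where "X n = (V (n + K), s (n + K))" for n
  have "bounded (range X)"
  proof (rule boundedI)
    fix x assume "x \<in> range X"
    then obtain n where x: "x = X n" by blast
    have "norm (V (n + K)) \<le> (\<Sum>j\<in>UNIV. \<Sum>l\<in>UNIV. \<bar>V (n + K) $ j $ l\<bar>)" by (rule norm_matrix_le)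
    also have "\<dots> \<le> (\<Sum>j\<in>(UNIV::('n+'n) set). \<Sum>l\<in>(UNIV::('n+'n) set). 16 / \<delta>\<^sup>2)"
      by (intro sum_mono Vb) simp
    finally have "norm (V (n + K)) \<le> (\<Sum>j\<in>(UNIV::('n+'n) set). \<Sum>l\<in>(UNIV::('n+'n) set). 16 / \<delta>\<^sup>2)" .
    moreover have "norm (s (n + K)) \<le> pi / \<delta>" by (rule sb) simp
    moreover have "norm x \<le> norm (V (n + K)) + norm (s (n + K))" unfolding x X_def by (rule norm_Pair_le)
    ultimately show "norm x \<le> (\<Sum>j\<in>(UNIV::('n+'n) set). \<Sum>l\<in>(UNIV::('n+'n) set). 16 / \<delta>\<^sup>2) + pi / \<delta>" by linarith
  qed
  then obtain L r where r: "strict_mono r" and Lr: "(X \<circ> r) \<longlonglongrightarrow> L"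
    using bounded_imp_convergent_subsequence by blast
  define Vl where "Vl = fst L"
  define sl where "sl = snd L"
  define r' where "r' n = r n + K" for n
  have r': "strict_mono r'" using r unfolding r'_def strict_mono_def by simp
  have VL: "(\<lambda>n. V (r' n)) \<longlonglongrightarrow> Vl"
    using tendsto_fst[OF Lr] unfolding Vl_def r'_def X_def o_def by simp
  have SL: "(\<lambda>n. s (r' n)) \<longlonglongrightarrow> sl"
    using tendsto_snd[OF Lr] unfolding sl_def r'_def X_def o_def by simp
  have Vl_QCM: "Vl \<in> QCM" unfolding QCM_def mem_Collect_eq
  proof (intro conjI allI)
    show "transpose Vl = Vl" unfolding vec_eq_iff
    proof (intro allI)
      fix i j
      have "(\<lambda>n. V (r' n) $ j $ i) \<longlonglongrightarrow> Vl $ j $ i" by (intro tendsto_vec_nth VL)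
      moreover have "(\<lambda>n. V (r' n) $ j $ i) = (\<lambda>n. V (r' n) $ i $ j)"
      proof
        fix n
        have "transpose (V (r' n)) $ i $ j = V (r' n) $ i $ j" using QCM_sym[OF assms(1)] by simp
        then show "V (r' n) $ j $ i = V (r' n) $ i $ j" by (simp add: transpose_def)
      qed
      moreover have "(\<lambda>n. V (r' n) $ i $ j) \<longlonglongrightarrow> Vl $ i $ j" by (intro tendsto_vec_nth VL)
      ultimately have "Vl $ j $ i = Vl $ i $ j" using LIMSEQ_unique by metis
      then show "transpose Vl $ i $ j = Vl $ i $ j" by (simp add: transpose_def)
    qed
    fix z :: "complex^('n + 'n)"
    let ?f = "\<lambda>W :: real^('n + 'n)^('n + 'n). Re (\<Sum>j\<in>UNIV. \<Sum>k\<in>UNIV.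
         cnj (z $ j) * (complex_of_real (W $ j $ k) - \<i> * complex_of_real (Omega $ j $ k)) * z $ k)"
    have "(\<lambda>n. ?f (V (r' n))) \<longlonglongrightarrow> ?f Vl"
      by (intro tendsto_intros VL)
    moreover have "\<forall>n. 0 \<le> ?f (V (r' n))" using assms(1) unfolding QCM_def by blast
    ultimately show "0 \<le> ?f Vl" by (intro LIMSEQ_le_const) auto
  qed
  have gauss: "is_gaussian Vl sl \<rho>" unfolding is_gaussian_def
  proof (intro conjI allI)
    show "trace_class \<rho>" by (rule assms(3))
    fix \<xi>
    have "(\<lambda>n. chiG (V (r' n)) (s (r' n)) \<xi>) \<longlonglongrightarrow> chr \<xi>"
      using LIMSEQ_subseq_LIMSEQ[OF conv r'] by (simp add: o_def)
    moreover have "(\<lambda>n. chiG (V (r' n)) (s (r' n)) \<xi>) \<longlonglongrightarrow> chiG Vl sl \<xi>"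
      unfolding chiG_def by (intro tendsto_intros tendsto_mv VL SL)
    ultimately have "chr \<xi> = chiG Vl sl \<xi>" by (rule LIMSEQ_unique)
    then show "trace (\<lambda>\<psi>. \<rho> (disp \<xi> \<psi>)) =
        exp (complex_of_real (- (1/4) * inner (Omega *v \<xi>) (Vl *v (Omega *v \<xi>)))
             + \<i> * complex_of_real (inner sl (Omega *v \<xi>)))"
      unfolding chr_def chiG_def .
  qed
  show ?thesis unfolding Gaussian_states_def using Vl_QCM gauss by blast
qed

end
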